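(* Let $F\ge1$, $N_{\max}\ge1$. Consider finite sets $A=\{(s_j,x_j,E_j)\}$ of triples with $s_j\in\mathbb{R}^F$, $x_j\in\mathbb{R}^{1\times3}$, $E_j\in\mathbb{R}^{3\times 3}$, with $|A|\le N_{\max}$ and with the $x_j$ pairwise distinct within $A$; write $\pi(A)=\{(s_j,x_j):(s_j,x_j,E_j)\in A\}$. There exist an integer $D$, a function $\varphi:\mathbb{R}^{3+9+F}\to\mathbb{R}^D$ and a function $\rho$ on $\mathbb{R}^D$ such that for every invertible $E\in\mathbb{R}^{3\times3}$ and all such sets $A,A'$, $$\rho\Big(\sum_{(s,x,E')\in A}\varphi\big(\mathrm{Concatenate}(xE^T,\,E'E^T,\,s)\big)\Big)=\rho\Big(\sum_{(s,x,E')\in A'}\varphi\big(\mathrm{Concatenate}(xE^T,\,E'E^T,\,s)\big)\Big)$$ implies $\pi(A)=\pi(A')$.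
   Context: $\mathrm{Concatenate}(xE^T,E'E^T,s)$ denotes the concatenation of the entries of $xE^T\in\mathbb{R}^{1\times 3}$, of the flattened matrix $E'E^T\in\mathbb{R}^{3\times 3}$ (the projection of the neighbour frame $E'$ onto the center frame $E$), and of $s\in\mathbb{R}^F$. *)

theory Defs
  imports "HOL-Analysis.Analysis"
begin

text \<open>A triple (s, x, E) with s in R^F (a real list of length F), x a row vector
  in R^{1x3} (represented as real^3) and E a 3x3 real matrix.\<close>
type_synonym triple = "real list \<times> (real^3) \<times> (real^3^3)"

text \<open>Admissible sets: finite, of cardinality at most Nmax, s of length F,
  and the positions x pairwise distinct.\<close>
definition admissible :: "nat \<Rightarrow> nat \<Rightarrow> triple set \<Rightarrow> bool" where
  "admissible F Nmax A \<longleftrightarrow> finite A \<and> card A \<le> Nmax \<and>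
     (\<forall>(s, x, E') \<in> A. length s = F) \<and>
     (\<forall>a\<in>A. \<forall>b\<in>A. fst (snd a) = fst (snd b) \<longrightarrow> a = b)"

definition proj :: "triple set \<Rightarrow> (real list \<times> (real^3)) set" where
  "proj A = (\<lambda>(s, x, E'). (s, x)) ` A"

definition idx3 :: "3 list" where "idx3 = [1, 2, 3]"

text \<open>Entries of a row vector and row-major flattening of a 3x3 matrix.\<close>
definition vec_entries :: "real^3 \<Rightarrow> real list" where
  "vec_entries v = map (\<lambda>i. v $ i) idx3"

definition mat_entries :: "real^3^3 \<Rightarrow> real list" where
  "mat_entries M = concat (map (\<lambda>i. map (\<lambda>j. M $ i $ j) idx3) idx3)"

text \<open>Concatenate(x E^T, E' E^T, s) in R^{3+9+F}. For the row vector x,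
  the row vector x E^T has entries (E *v x).\<close>
definition Concatenate :: "real^3 \<Rightarrow> real^3^3 \<Rightarrow> real list \<Rightarrow> real list" where
  "Concatenate xE EE s = vec_entries xE @ mat_entries EE @ s"

text \<open>Vectors in R^D are represented as functions nat => real supported on {..<D};
  sums are taken componentwise.\<close>
definition pool :: "(real list \<Rightarrow> (nat \<Rightarrow> real)) \<Rightarrow> real^3^3 \<Rightarrow> triple set \<Rightarrow> (nat \<Rightarrow> real)" where
  "pool \<phi> E A = (\<lambda>i. \<Sum>(s, x, E')\<in>A. \<phi> (Concatenate (E *v x) (E' ** transpose E) s) i)"

end

theory Submission imports Defs "HOL-Computational_Algebra.Polynomial" begin

lemma real_pair_inj: "\<exists>h::real\<times>real \<Rightarrow> real. inj h"
proof -
  obtain f where "bij_betw f ((UNIV::real set) \<times> (UNIV::real set)) (UNIV::real set)"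
    using card_of_ordIso[THEN iffD2, OF card_of_Times_same_infinite[OF infinite_UNIV_char_0]] by blast
  then show ?thesis by (auto simp: bij_betw_def)
qed

fun lcode :: "(real\<times>real \<Rightarrow> real) \<Rightarrow> real list \<Rightarrow> real" where
  "lcode h [] = 0"
| "lcode h (a # l) = h (a, lcode h l)"

lemma lcode_inj: "inj h \<Longrightarrow> length l = length l' \<Longrightarrow> lcode h l = lcode h l' \<Longrightarrow> l = l'"
proof (induction l arbitrary: l')
  case Nil then show ?case by simp
next
  case (Cons a l) then show ?case
    by (cases l') (auto dest: injD)
qed

lemma poly_sum_less:
  fixes p :: "real poly"
  assumes "degree p < n"
  shows "poly p x = (\<Sum>i<n. coeff p i * x ^ i)"
proof -
  have "poly p x = (\<Sum>i\<le>degree p. coeff p i * x ^ i)" by (rule poly_altdef)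
  also have "\<dots> = (\<Sum>i<n. coeff p i * x ^ i)"
    by (rule sum.mono_neutral_left) (use assms in \<open>auto simp: coeff_eq_0\<close>)
  finally show ?thesis .
qed

lemma power_sums_eq:
  fixes S T :: "real set"
  assumes fS: "finite S" and fT: "finite T" and cS: "card S \<le> N" and cT: "card T \<le> N"
    and eq: "\<And>i. i < 2*N \<Longrightarrow> (\<Sum>y\<in>S. y^i) = (\<Sum>y\<in>T. y^i)"
  shows "S = T"
proof -
  have main: "S \<subseteq> T" if fS: "finite S" and fT: "finite T" and cS: "card S \<le> N" and cT: "card T \<le> N"
    and eq: "\<And>i. i < 2*N \<Longrightarrow> (\<Sum>y\<in>S. y^i) = (\<Sum>y\<in>T. y^i)" for S T :: "real set"
  proof
    fix u0 assume u0: "u0 \<in> S"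
    show "u0 \<in> T"
    proof (rule ccontr)
      assume nT: "u0 \<notin> T"
      define W where "W = (S \<union> T) - {u0}"
      define P where "P = (\<Prod>u\<in>W. [:-u, 1:])"
      have fW: "finite W" using fS fT by (simp add: W_def)
      have cU: "card (S \<union> T) \<le> 2*N" using card_Un_le[of S T] cS cT by linarith
      have "card W < card (S \<union> T)" unfolding W_def using u0 fS fT
        by (meson UnI1 card_Diff1_less finite_UnI)
      hence cW: "card W < 2*N" using cU by linarith
      have "degree P \<le> (\<Sum>u\<in>W. degree [:-u, 1::real:])"
        unfolding P_def using degree_prod_sum_le[OF fW, of "\<lambda>u. [:-u,1:]"] by (simp add: o_def)
      also have "\<dots> = card W" by simp
      finally have dP: "degree P < 2*N" using cW by linarith
      have pP: "poly P x = (\<Prod>u\<in>W. x - u)" for x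
        unfolding P_def by (simp add: poly_prod)
      have sums: "(\<Sum>y\<in>A. poly P y) = (\<Sum>i<2*N. coeff P i * (\<Sum>y\<in>A. y^i))" for A
        by (simp add: poly_sum_less[OF dP] sum_distrib_left sum.swap[of _ A] mult.commute)
      have "(\<Sum>y\<in>S. poly P y) = (\<Sum>y\<in>T. poly P y)"
        unfolding sums using eq by simp
      moreover have "(\<Sum>y\<in>T. poly P y) = 0"
      proof (rule sum.neutral, intro ballI)
        fix y assume "y \<in> T"
        hence "y \<in> W" using nT by (auto simp: W_def)
        thus "poly P y = 0" unfolding pP using fW by (auto intro: prod_zero)
      qed
      moreover have "(\<Sum>y\<in>S. poly P y) = poly P u0"
      proof -
        have "(\<Sum>y\<in>S. poly P y) = poly P u0 + (\<Sum>y\<in>S-{u0}. poly P y)"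
          using u0 fS by (simp add: sum.remove)
        moreover have "(\<Sum>y\<in>S-{u0}. poly P y) = 0"
        proof (rule sum.neutral, intro ballI)
          fix y assume "y \<in> S - {u0}"
          hence "y \<in> W" by (auto simp: W_def)
          thus "poly P y = 0" unfolding pP using fW by (auto intro: prod_zero)
        qed
        ultimately show ?thesis by simp
      qed
      moreover have "poly P u0 \<noteq> 0" unfolding pP using fW by (auto simp: W_def)
      ultimately show False by simp
    qed
  qed
  show ?thesis using main[OF fS fT cS cT eq] main[OF fT fS cT cS] eq by (metis subset_antisym)
qed


lemma vec_entries_inj: "vec_entries v = vec_entries w \<Longrightarrow> v = w"
  unfolding vec_entries_def idx3_def
  by (simp add: vec_eq_iff) (metis exhaust_3)

lemma length_vec_entries[simp]: "length (vec_entries v) = 3"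
  by (simp add: vec_entries_def idx3_def)

lemma length_mat_entries[simp]: "length (mat_entries M) = 9"
  by (simp add: mat_entries_def idx3_def)

lemma inv_mv_inj:
  fixes E :: "real^3^3"
  assumes "invertible E" "E *v x = E *v y" shows "x = y"
proof -
  obtain B where "B ** E = mat 1" using assms(1) unfolding invertible_def by blast
  hence "x = B *v (E *v x)" "y = B *v (E *v y)"
    by (metis matrix_vector_mul_assoc matrix_vector_mul_lid)+
  thus ?thesis using assms(2) by simp
qed

lemma concat_inj:
  fixes E :: "real^3^3"
  assumes "invertible E"
    and "Concatenate (E *v x) M s = Concatenate (E *v x') M' s'"
  shows "s = s' \<and> x = x'"
proof -
  from assms(2) have "vec_entries (E *v x) = vec_entries (E *v x') \<and> mat_entries M @ s = mat_entries M' @ s'"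
    unfolding Concatenate_def by (simp add: append_eq_append_conv)
  moreover hence "s = s'" by (simp add: append_eq_append_conv)
  ultimately show ?thesis using vec_entries_inj inv_mv_inj[OF assms(1)] by blast
qed

theorem proposition5:
  fixes F Nmax :: nat
  assumes "F \<ge> 1" and "Nmax \<ge> 1"
  shows "\<exists>D::nat. \<exists>\<phi> :: real list \<Rightarrow> (nat \<Rightarrow> real). \<exists>\<rho> :: (nat \<Rightarrow> real) \<Rightarrow> (nat \<Rightarrow> real).
           (\<forall>v i. D \<le> i \<longrightarrow> \<phi> v i = 0) \<and>
           (\<forall>E A A'. invertible E \<longrightarrow> admissible F Nmax A \<longrightarrow> admissible F Nmax A' \<longrightarrow>
              \<rho> (pool \<phi> E A) = \<rho> (pool \<phi> E A') \<longrightarrow> proj A = proj A')"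
proof -
  obtain h :: "real\<times>real \<Rightarrow> real" where h: "inj h" using real_pair_inj by blast
  define g where "g = lcode h"
  define \<phi> where "\<phi> = (\<lambda>v i. if i < 2*Nmax then g v ^ i else (0::real))"
  have "(\<forall>v i. 2*Nmax \<le> i \<longrightarrow> \<phi> v i = 0) \<and>
           (\<forall>E A A'. invertible E \<longrightarrow> admissible F Nmax A \<longrightarrow> admissible F Nmax A' \<longrightarrow>
              id (pool \<phi> E A) = id (pool \<phi> E A') \<longrightarrow> proj A = proj A')"
  proof (intro conjI allI impI)
    fix v i assume "2*Nmax \<le> i" thus "\<phi> v i = 0" by (simp add: \<phi>_def)
  next
    fix E :: "real^3^3" and A A' :: "triple set"
    assume E: "invertible E" and aA: "admissible F Nmax A" and aA': "admissible F Nmax A'"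
      and eq: "id (pool \<phi> E A) = id (pool \<phi> E A')"
    define c where "c = (\<lambda>(s::real list, x::real^3, E'::real^3^3). Concatenate (E *v x) (E' ** transpose E) s)"
    have cinj: "inj_on c B" if "admissible F Nmax B" for B
    proof (rule inj_onI)
      fix a b assume a: "a \<in> B" and b: "b \<in> B" and "c a = c b"
      then have "fst (snd a) = fst (snd b)"
        using concat_inj[OF E] by (cases a, cases b) (auto simp: c_def)
      thus "a = b" using that a b unfolding admissible_def by blast
    qed
    have clen: "length (c a) = 12 + F" if "admissible F Nmax B" "a \<in> B" for a B
      using that unfolding admissible_def c_def Concatenate_def by (cases a) auto
    have ginj: "inj_on g (c ` A \<union> c ` A')"
      unfolding g_def by (rule inj_onI) (auto intro: lcode_inj[OF h] simp: clen[OF aA] clen[OF aA'])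
    have fin: "finite A" "finite A'" "card A \<le> Nmax" "card A' \<le> Nmax"
      using aA aA' by (auto simp: admissible_def)
    have ps: "(\<Sum>y\<in>g ` c ` B. y^i) = pool \<phi> E B i"
      if "admissible F Nmax B" "B = A \<or> B = A'" "i < 2*Nmax" for B i
    proof -
      have gi: "inj_on g (c ` B)" using ginj that(2) by (auto intro: inj_on_subset)
      have "(\<Sum>y\<in>g ` c ` B. y^i) = (\<Sum>v\<in>c ` B. g v ^ i)"
        by (simp add: sum.reindex[OF gi])
      also have "\<dots> = (\<Sum>a\<in>B. g (c a) ^ i)"
        by (simp add: sum.reindex[OF cinj[OF that(1)]])
      also have "\<dots> = pool \<phi> E B i"
        unfolding pool_def \<phi>_def c_def using that(3) by (simp add: case_prod_beta)
      finally show ?thesis .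
    qed
    have "g ` c ` A = g ` c ` A'"
    proof (rule power_sums_eq[where N=Nmax])
      show "finite (g ` c ` A)" "finite (g ` c ` A')" using fin by auto
      show "card (g ` c ` A) \<le> Nmax" using fin card_image_le
        by (meson finite_imageI le_trans)
      show "card (g ` c ` A') \<le> Nmax" using fin card_image_le
        by (meson finite_imageI le_trans)
      fix i assume "i < 2*Nmax"
      thus "(\<Sum>y\<in>g ` c ` A. y^i) = (\<Sum>y\<in>g ` c ` A'. y^i)"
        using ps[OF aA _ ] ps[OF aA' _] eq by simp
    qed
    hence cc: "c ` A = c ` A'"
      using inj_on_image_eq_iff[OF ginj, of "c ` A" "c ` A'"] by simp
    have sub: "proj B \<subseteq> proj B'" if "c ` B = c ` B'" for B B'
    proof
      fix p assume "p \<in> proj B"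
      then obtain a where a0: "a \<in> B" and pa: "p = (\<lambda>(s, x, E'). (s, x)) a" unfolding proj_def by (rule imageE)
      obtain s x E' where ae: "a = (s, x, E')" by (cases a)
      have a: "(s, x, E') \<in> B" and p: "p = (s, x)" using a0 pa ae by simp_all
      have "c (s, x, E') \<in> c ` B'" using that a by (metis imageI)
      then obtain b where b: "b \<in> B'" "c (s, x, E') = c b" by (rule imageE) simp
      obtain s2 x2 E2 where "b = (s2, x2, E2)" by (cases b)
      with b concat_inj[OF E] have "b \<in> B'" "s = s2" "x = x2" by (auto simp: c_def)
      thus "p \<in> proj B'" using p \<open>b = _\<close> by (force simp: proj_def)
    qed
    show "proj A = proj A'" using sub[OF cc] sub[OF cc[symmetric]] by blast
  qed
  thus ?thesis by blast
qed

end
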